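(* Let $\mathcal{X}$ be a countable set and $\pi$ a probability distribution on $\mathcal{X}$. For $i=1,\dots,n$ let $S_i:\mathcal{X}\to\mathcal{X}$ be an involution ($S_i\circ S_i=\mathrm{id}$) which is $\pi$-invariant ($\pi(S_i(A))=\pi(A)$ for all $A\subset\mathcal{X}$), let $P_i$ be a Markov kernel on $\mathcal{X}$, and let $\omega=(\omega_1,\dots,\omega_n):\mathcal{X}\to\Delta^{n-1}$, where $\Delta^{n-1}=\{y\in\mathbb{R}^n: y_i\ge 0,\ \sum_{i=1}^n y_i=1\}$. Define the Markov kernel $\mathcal{K}(x,\cdot)=\sum_{i=1}^n\omega_i(x)P_i(x,\cdot)$. Suppose $\mathcal{K}$ satisfies the mixed skewed balance condition with respect to $\pi$, i.e. for all $x,x'\in\mathcal{X}$ and all $i\in\{1,\dots,n\}$, $$\omega_i(x)\,\pi(x)\,P_i(x,x')=\omega_i(x')\,\pi(x')\,P_i\big(S_i(x'),S_i(x)\big).$$ Then $\pi$ is invariant under $\mathcal{K}$, i.e. $\sum_{x\in\mathcal{X}}\pi(x)\mathcal{K}(x,x')=\pi(x')$ for all $x'\in\mathcal{X}$. *)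

theory Defs
  imports "HOL-Probability.Probability"
begin

definition mix_kernel :: "nat \<Rightarrow> ('a \<Rightarrow> nat \<Rightarrow> real) \<Rightarrow> (nat \<Rightarrow> 'a \<Rightarrow> 'a pmf) \<Rightarrow> 'a \<Rightarrow> 'a \<Rightarrow> real" where
  "mix_kernel n \<omega> P x x' = (\<Sum>i=1..n. \<omega> x i * pmf (P i x) x')"

end

theory Submission
  imports Defs
begin

lemma pmf_has_sum_1: "(pmf p has_sum 1) UNIV"
proof -
  have a: "Infinite_Set_Sum.abs_summable_on (pmf p) UNIV" by blast
  have s: "pmf p summable_on UNIV"
    using a abs_summable_equivalent abs_summable_summable by blast
  have "infsum (pmf p) UNIV = 1"
    using infsetsum_infsum[OF a] infsetsum_pmf_eq_1[of p UNIV] by simp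
  thus ?thesis using s has_sum_iff by blast
qed

lemma has_sum_finite_sum_gen:
  fixes f :: "nat \<Rightarrow> 'a \<Rightarrow> real"
  assumes "finite I" "\<And>i. i \<in> I \<Longrightarrow> (f i has_sum c i) A"
  shows "((\<lambda>x. \<Sum>i\<in>I. f i x) has_sum (\<Sum>i\<in>I. c i)) A"
  using assms
proof (induction I rule: finite_induct)
  case empty
  then show ?case by simp
next
  case (insert j F)
  have "((\<lambda>x. f j x + (\<Sum>i\<in>F. f i x)) has_sum (c j + (\<Sum>i\<in>F. c i))) A"
    by (rule has_sum_add) (use insert in auto)
  then show ?case using insert by simp
qed

theorem theorem4p1:
  fixes \<pi> :: "'a::countable pmf"
    and n :: nat
    and S :: "nat \<Rightarrow> 'a \<Rightarrow> 'a"
    and P :: "nat \<Rightarrow> 'a \<Rightarrow> 'a pmf"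
    and \<omega> :: "'a \<Rightarrow> nat \<Rightarrow> real"
  assumes invol: "\<And>i x. i \<in> {1..n} \<Longrightarrow> S i (S i x) = x"
    and S_inv: "\<And>i A. i \<in> {1..n} \<Longrightarrow> measure_pmf.prob \<pi> (S i ` A) = measure_pmf.prob \<pi> A"
    and \<omega>_nonneg: "\<And>x i. i \<in> {1..n} \<Longrightarrow> \<omega> x i \<ge> 0"
    and \<omega>_sum: "\<And>x. (\<Sum>i=1..n. \<omega> x i) = 1"
    and skewed: "\<And>x x' i. i \<in> {1..n} \<Longrightarrow>
       \<omega> x i * pmf \<pi> x * pmf (P i x) x' = \<omega> x' i * pmf \<pi> x' * pmf (P i (S i x')) (S i x)"
  shows "\<And>x'. ((\<lambda>x. pmf \<pi> x * mix_kernel n \<omega> P x x') has_sum pmf \<pi> x') UNIV"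
proof -
  fix x'
  have each: "((\<lambda>x. \<omega> x i * pmf \<pi> x * pmf (P i x) x') has_sum (\<omega> x' i * pmf \<pi> x')) UNIV"
    if i: "i \<in> {1..n}" for i
  proof -
    have bij: "bij_betw (S i) UNIV UNIV"
      by (rule bij_betwI[where g="S i"]) (use invol[OF i] in auto)
    have "((\<lambda>x. pmf (P i (S i x')) (S i x)) has_sum 1) UNIV"
      using has_sum_reindex_bij_betw[OF bij, of "pmf (P i (S i x'))" 1] pmf_has_sum_1 by simp
    hence "((\<lambda>x. (\<omega> x' i * pmf \<pi> x') * pmf (P i (S i x')) (S i x)) has_sum (\<omega> x' i * pmf \<pi> x' * 1)) UNIV"
      by (rule has_sum_cmult_right)
    thus ?thesis using skewed[OF i] by simp
  qed
  have "((\<lambda>x. \<Sum>i\<in>{1..n}. \<omega> x i * pmf \<pi> x * pmf (P i x) x') has_sum (\<Sum>i\<in>{1..n}. \<omega> x' i * pmf \<pi> x')) UNIV"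
    by (rule has_sum_finite_sum_gen) (use each in auto)
  moreover have "(\<Sum>i\<in>{1..n}. \<omega> x' i * pmf \<pi> x') = pmf \<pi> x'"
    using \<omega>_sum[of x'] by (simp add: sum_distrib_right[symmetric])
  moreover have "\<And>x. (\<Sum>i\<in>{1..n}. \<omega> x i * pmf \<pi> x * pmf (P i x) x') = pmf \<pi> x * mix_kernel n \<omega> P x x'"
    unfolding mix_kernel_def by (simp add: sum_distrib_left mult_ac)
  ultimately show "((\<lambda>x. pmf \<pi> x * mix_kernel n \<omega> P x x') has_sum pmf \<pi> x') UNIV" by simp
qed

end
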